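(* Let $w(x,y)=x^{a_1}y^{b_1}\cdots x^{a_k}y^{b_k}\in F_2$ with $k\ge1$ and all integers $a_i\neq0$, $b_i\neq0$. If all $b_i$ are negative, then either the word map $w:\mathrm{SL}(2,\mathbb{C})^2\to\mathrm{SL}(2,\mathbb{C})$ is surjective, or $w=v^2$ for some word $v\neq\mathrm{id}$.
   Context: The word map sends $(X,Y)$ to $X^{a_1}Y^{b_1}\cdots X^{a_k}Y^{b_k}$. *)

theory Defs
  imports "HOL-Analysis.Analysis"
begin

text \<open>The free group F_2 on generators x, y, realised as words modulo free reduction.
  A letter is a pair (g, e): g = True means the generator x, g = False means y;
  e = True means the inverse of that generator.\<close>

type_synonym letter = "bool \<times> bool"

inductive free_step :: "letter list \<Rightarrow> letter list \<Rightarrow> bool" where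
  cancel: "free_step (u @ [(g, e), (g, \<not> e)] @ v) (u @ v)"

definition free_eq :: "letter list \<Rightarrow> letter list \<Rightarrow> bool" where
  "free_eq w v \<longleftrightarrow> equivclp free_step w v"

definition gen_pow :: "bool \<Rightarrow> int \<Rightarrow> letter list" where
  "gen_pow g n = replicate (nat \<bar>n\<bar>) (g, n < 0)"

definition xy_word :: "nat \<Rightarrow> (nat \<Rightarrow> int) \<Rightarrow> (nat \<Rightarrow> int) \<Rightarrow> letter list" where
  "xy_word k a b = concat (map (\<lambda>i. gen_pow True (a i) @ gen_pow False (b i)) [1..<k+1])"

definition SL2C :: "(complex^2^2) set" where
  "SL2C = {A. det A = 1}"

definition letter_mat :: "complex^2^2 \<Rightarrow> complex^2^2 \<Rightarrow> letter \<Rightarrow> complex^2^2" where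
  "letter_mat X Y l = (let M = (if fst l then X else Y) in if snd l then matrix_inv M else M)"

definition word_map :: "letter list \<Rightarrow> complex^2^2 \<Rightarrow> complex^2^2 \<Rightarrow> complex^2^2" where
  "word_map w X Y = foldr (\<lambda>l M. letter_mat X Y l ** M) w (mat 1)"

definition word_map_surjective_SL2C :: "letter list \<Rightarrow> bool" where
  "word_map_surjective_SL2C w \<longleftrightarrow>
     (\<forall>g\<in>SL2C. \<exists>X\<in>SL2C. \<exists>Y\<in>SL2C. word_map w X Y = g)"

end

theory Submission
  imports Defs "HOL-Computational_Algebra.Polynomial"
begin


definition M2 :: "complex \<Rightarrow> complex \<Rightarrow> complex \<Rightarrow> complex \<Rightarrow> complex^2^2" where
  "M2 p q r w = (\<chi> i j. if i = 1 then (if j = 1 then p else q) else (if j = 1 then r else w))"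

lemma M2_nth[simp]: "M2 p q r w $ 1 $ 1 = p" "M2 p q r w $ 1 $ 2 = q" "M2 p q r w $ 2 $ 1 = r" "M2 p q r w $ 2 $ 2 = w"
  by (simp_all add: M2_def)

lemma M2_eta: "A = M2 (A$1$1) (A$1$2) (A$2$1) (A$2$2)"
  by (simp add: vec_eq_iff forall_2)

lemma M2_eq_iff: "M2 p q r w = M2 p2 q2 r2 s2 \<longleftrightarrow> p = p2 \<and> q = q2 \<and> r = r2 \<and> w = s2"
  by (auto simp: vec_eq_iff forall_2)

lemma M2_mult: "M2 p q r w ** M2 p2 q2 r2 s2 = M2 (p*p2+q*r2) (p*q2+q* s2) (r*p2+w* r2) (r*q2+w* s2)"
  by (simp add: vec_eq_iff forall_2 matrix_matrix_mult_def sum_2)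

lemma M2_one: "mat 1 = M2 1 0 0 1"
  by (simp add: vec_eq_iff forall_2 mat_def)

lemma M2_det: "det (M2 p q r w) = p*w - q*r"
  by (simp add: det_2)

lemma minv_eq: assumes "A ** B = mat 1" "B ** A = mat 1" shows "matrix_inv A = B"
proof -
  have "A ** matrix_inv A = mat 1 \<and> matrix_inv A ** A = mat 1"
    unfolding matrix_inv_def by (rule someI[of _ B]) (use assms in auto)
  then show ?thesis by (metis assms matrix_mul_assoc matrix_mul_lid matrix_mul_rid)
qed

lemma minv_M2: assumes "p*w - q*r = 1" shows "matrix_inv (M2 p q r w) = M2 w (-q) (-r) p"
  by (rule minv_eq) (use assms in \<open>auto simp: M2_mult M2_one M2_eq_iff algebra_simps\<close>)

definition Tm :: "complex \<Rightarrow> complex \<Rightarrow> complex^2^2" where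
  "Tm d e = M2 d e 0 (inverse d)"

lemma Tm_mult: "Tm d e ** Tm d2 e2 = Tm (d*d2) (d*e2 + e * inverse d2)"
  by (simp add: Tm_def M2_mult M2_eq_iff)

lemma Tm_det: "d \<noteq> 0 \<Longrightarrow> det (Tm d e) = 1"
  by (simp add: Tm_def M2_det)

lemma Tm_inv: "d \<noteq> 0 \<Longrightarrow> matrix_inv (Tm d e) = Tm (inverse d) (- e)"
  unfolding Tm_def by (subst minv_M2) (auto simp: M2_eq_iff)

lemma Tm_one: "mat 1 = Tm 1 0"
  by (simp add: Tm_def M2_one)



lemma word_map_Nil: "word_map [] X Y = mat 1" by (simp add: word_map_def)
lemma word_map_Cons: "word_map (l # w) X Y = letter_mat X Y l ** word_map w X Y"
  by (simp add: word_map_def)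
lemma word_map_append: "word_map (w1 @ w2) X Y = word_map w1 X Y ** word_map w2 X Y"
  by (induction w1) (auto simp: word_map_Nil word_map_Cons matrix_mul_assoc)

definition dl :: "complex \<Rightarrow> complex \<Rightarrow> letter \<Rightarrow> complex" where
  "dl s t l = (if fst l then (if snd l then inverse s else s) else (if snd l then inverse t else t))"
definition el :: "letter \<Rightarrow> complex" where
  "el l = (if fst l then 0 else if snd l then -1 else 1)"

fun Dw :: "complex \<Rightarrow> complex \<Rightarrow> letter list \<Rightarrow> complex" where
  "Dw s t [] = 1"
| "Dw s t (l # w) = dl s t l * Dw s t w"
fun Ew :: "complex \<Rightarrow> complex \<Rightarrow> letter list \<Rightarrow> complex" where
  "Ew s t [] = 0"
| "Ew s t (l # w) = dl s t l * Ew s t w + el l * inverse (Dw s t w)"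

lemma letter_mat_tri: assumes "s \<noteq> 0" "t \<noteq> 0"
  shows "letter_mat (Tm s 0) (Tm t v) l = Tm (dl s t l) (v * el l)"
  using assms by (cases l) (auto simp: letter_mat_def dl_def el_def Tm_inv)

lemma word_map_tri: assumes "s \<noteq> 0" "t \<noteq> 0"
  shows "word_map w (Tm s 0) (Tm t v) = Tm (Dw s t w) (v * Ew s t w)"
proof (induction w)
  case Nil then show ?case by (simp add: word_map_Nil Tm_one)
next
  case (Cons l w) then show ?case
    by (simp add: word_map_Cons letter_mat_tri[OF assms] Tm_mult algebra_simps)
qed

lemma Dw_append: "Dw s t (w1 @ w2) = Dw s t w1 * Dw s t w2"
  by (induction w1) auto
lemma Ew_append: "Ew s t (w1 @ w2) = Dw s t w1 * Ew s t w2 + Ew s t w1 * inverse (Dw s t w2)"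
  by (induction w1) (auto simp: Dw_append algebra_simps)

definition G :: "int list \<Rightarrow> letter list" where
  "G ds = concat (map (\<lambda>d. gen_pow True d @ [(False, True)]) ds)"

lemma G_append: "G (xs @ ys) = G xs @ G ys" by (simp add: G_def)
lemma G_Nil: "G [] = []" by (simp add: G_def)
lemma G_snoc: "G (ds @ [d]) = G ds @ (gen_pow True d @ [(False, True)])" by (simp add: G_def)

lemma Dw_rep: "Dw s t (replicate n l) = dl s t l ^ n" by (induction n) auto
lemma Ew_rep_x: "fst l \<Longrightarrow> Ew s t (replicate n l) = 0" by (induction n) (auto simp: el_def)

lemma Dw_gp: "Dw s t (gen_pow True d) = s powi d"
  by (auto simp: gen_pow_def Dw_rep dl_def power_int_def)
lemma Ew_gp: "Ew s t (gen_pow True d) = 0"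
  by (auto simp: gen_pow_def Ew_rep_x)

lemma Dw_G: assumes "s \<noteq> 0" shows "Dw s t (G ds) = s powi (sum_list ds) * inverse t ^ length ds"
proof (induction ds rule: rev_induct)
  case Nil then show ?case by (simp add: G_Nil)
next
  case (snoc d ds) then show ?case
    using assms by (simp add: G_snoc Dw_append Dw_gp dl_def power_int_add)
qed

definition cc :: "int list \<Rightarrow> nat \<Rightarrow> int" where
  "cc ds j = sum_list (take (Suc j) ds)"

definition Fs :: "complex \<Rightarrow> complex \<Rightarrow> int list \<Rightarrow> complex" where
  "Fs s u ds = (\<Sum>j<length ds. s powi (2 * cc ds j) * u ^ (2 * j))"

lemma alg_step:
  fixes E E2 P U qq u iK F F2 :: complex
  assumes "E2 = - (P * U * qq) + E * iK" "iK * (qq * u) = 1" "F2 = F + (P*qq)*(P*qq)*(U*U)"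
    "E * P * U = - u * F"
  shows "E2 * (P * qq) * (U * u) = - u * F2"
proof -
  have "E2 * (P * qq) * (U * u) = -(u * ((P*qq)*(P*qq)*(U*U))) + (E * P * U) * (iK * (qq * u))"
    unfolding assms(1) by (simp add: algebra_simps)
  then show ?thesis unfolding assms(2,3,4) by (simp add: algebra_simps)
qed

lemma Ew_G: assumes "s \<noteq> 0" "t \<noteq> 0"
  shows "Ew s t (G ds) * (s powi sum_list ds) * inverse t ^ length ds = - inverse t * Fs s (inverse t) ds"
proof (induction ds rule: rev_induct)
  case Nil then show ?case by (simp add: G_Nil Fs_def)
next
  case (snoc d ds)
  let ?S = "sum_list ds" and ?L = "length ds" and ?u = "inverse t"
  have uu: "?u ^ (2 * ?L) = ?u ^ ?L * ?u ^ ?L" by (simp add: power_add[symmetric] mult_2)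
  have ss: "s powi (2 * (?S + d)) = (s powi ?S * s powi d) * (s powi ?S * s powi d)"
  proof -
    have a: "\<And>m n. s powi (m + n) = s powi m * s powi n" using assms by (simp add: power_int_add)
    show ?thesis unfolding mult_2 a by (simp only: mult.assoc)
  qed
  have F: "Fs s ?u (ds @ [d]) = Fs s ?u ds + (s powi ?S * s powi d) * (s powi ?S * s powi d) * (?u ^ ?L * ?u ^ ?L)"
    unfolding uu[symmetric] ss[symmetric] by (simp add: Fs_def cc_def)
  have E: "Ew s t (G (ds @ [d])) = - (s powi ?S * ?u ^ ?L * s powi d) + Ew s t (G ds) * inverse (s powi d * ?u)"
    unfolding G_snoc Ew_append Dw_append Ew_gp Dw_gp Dw_G[OF assms(1)] by (simp add: dl_def el_def)
  have nz: "inverse (s powi d * ?u) * (s powi d * ?u) = 1" by (rule left_inverse) (use assms in simp)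
  have sp: "s powi sum_list (ds @ [d]) = s powi ?S * s powi d" using assms by (simp add: power_int_add)
  have lp: "?u ^ length (ds @ [d]) = ?u ^ ?L * ?u" by simp
  show ?case unfolding sp lp
    by (rule alg_step[OF E nz F snoc])
qed



lemma two_powi_inj: "(2::complex) powi a = 2 powi b \<Longrightarrow> a = b"
proof -
  assume h: "(2::complex) powi a = 2 powi b"
  have "complex_of_real ((2::real) powi a) = complex_of_real (2 powi b)"
    using h by (simp add: of_real_power_int)
  then have r: "(2::real) powi a = 2 powi b" by (simp only: of_real_eq_iff)
  show "a = b"
  proof (rule ccontr)
    assume "a \<noteq> b"
    then have "a < b \<or> b < a" by auto
    then show False using r power_int_strict_increasing[of a b "2::real"]
      power_int_strict_increasing[of b a "2::real"] by auto
  qed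
qed

lemma sum_split_add: "(\<Sum>j<(n::nat)+m. f j) = (\<Sum>j<n. f j) + (\<Sum>j<m. f (j + n))"
  by (induction m) (simp_all add: ac_simps)

lemma poly_vanish:
  fixes \<beta> :: "nat \<Rightarrow> complex"
  assumes n: "n > 0" and mu: "\<mu> \<noteq> 0"
    and h: "\<And>z. z ^ n = \<mu> \<Longrightarrow> (\<Sum>j<n. \<beta> j * z ^ j) = 0"
    and i: "i < n"
  shows "\<beta> i = 0"
proof -
  define q where "q = (\<Sum>j<n. monom (\<beta> j) j)"
  have cq: "coeff q i = (if i < n then \<beta> i else 0)" for i
    unfolding q_def coeff_sum by (auto simp: coeff_monom)
  have pq: "poly q z = (\<Sum>j<n. \<beta> j * z ^ j)" for z
    unfolding q_def poly_sum by (simp add: poly_monom)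
  have dq: "degree q \<le> n - 1"
    by (rule degree_le) (auto simp: cq)
  have "q = 0"
  proof (rule ccontr)
    assume q0: "q \<noteq> 0"
    have "{z. z ^ n = \<mu>} \<subseteq> {z. poly q z = 0}" using h pq by auto
    then have "card {z. z ^ n = \<mu>} \<le> card {z. poly q z = 0}"
      by (intro card_mono poly_roots_finite q0)
    also have "\<dots> \<le> degree q" by (rule card_poly_roots_bound[OF q0])
    finally show False using card_nth_roots[OF mu n] dq n by linarith
  qed
  then show ?thesis using cq[of i] i by simp
qed

lemma cc_step: "j < length ds \<Longrightarrow> cc ds (Suc j) = cc ds j + ds ! Suc j \<or> Suc j \<ge> length ds"
  by (auto simp: cc_def take_Suc_conv_app_nth)

lemma cc_diff: "Suc j < length ds \<Longrightarrow> ds ! Suc j = cc ds (Suc j) - cc ds j"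
  by (simp add: cc_def take_Suc_conv_app_nth)

lemma cc0: "ds \<noteq> [] \<Longrightarrow> ds ! 0 = cc ds 0"
  by (cases ds) (auto simp: cc_def)

lemma cc_last: "length ds = Suc m \<Longrightarrow> cc ds m = sum_list ds"
  by (simp add: cc_def)

lemma combi:
  assumes L: "length ds = n + n" and n: "n > 0"
    and R: "\<And>j. j < n \<Longrightarrow> 2 * cc ds j = 2 * cc ds (j + n) - sum_list ds"
  shows "ds = take n ds @ take n ds"
proof -
  have last: "cc ds (n - 1 + n) = sum_list ds" using L n by (intro cc_last) simp
  have mid: "2 * cc ds (n - 1) = sum_list ds" using R[of "n - 1"] n last by simp
  have per: "ds ! (i + n) = ds ! i" if i: "i < n" for i
  proof (cases i)
    case 0
    have "ds ! n = cc ds n - cc ds (n - 1)" using cc_diff[of "n - 1" ds] n L by simp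
    moreover have "ds \<noteq> []" using L n by auto
    then have "ds ! 0 = cc ds 0" by (rule cc0)
    ultimately show ?thesis using R[of 0] mid n 0 by simp
  next
    case (Suc i')
    have a: "ds ! (i + n) = cc ds (i + n) - cc ds (i' + n)" using cc_diff[of "i' + n" ds] Suc i L by simp
    have b: "ds ! i = cc ds i - cc ds i'" using cc_diff[of i' ds] Suc i L by simp
    show ?thesis using a b R[of i] R[of i'] i Suc by simp
  qed
  show ?thesis
  proof (rule nth_equalityI)
    show "length ds = length (take n ds @ take n ds)" using L by simp
    fix i assume "i < length ds"
    then show "ds ! i = (take n ds @ take n ds) ! i"
      using L per[of "i - n"] by (auto simp: nth_append)
  qed
qed



lemma hard:
  assumes L: "length ds = n + n" and n: "n > 0"
    and H: "\<And>u. u \<noteq> 0 \<Longrightarrow> 2 powi sum_list ds * u ^ length ds = -1 \<Longrightarrow> Fs 2 u ds = 0"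
  shows "ds = take n ds @ take n ds"
proof -
  define S where "S = sum_list ds"
  define \<mu> :: complex where "\<mu> = - inverse (2 powi S)"
  have mu: "\<mu> \<noteq> 0" by (simp add: \<mu>_def)
  have Smu: "2 powi S * \<mu> = -1" by (simp add: \<mu>_def)
  define \<beta> where "\<beta> j = 2 powi (2 * cc ds j) + \<mu> * 2 powi (2 * cc ds (j + n))" for j
  have key: "(\<Sum>j<n. \<beta> j * z ^ j) = 0" if z: "z ^ n = \<mu>" for z
  proof -
    define u where "u = csqrt z"
    have uz: "u ^ 2 = z" by (simp add: u_def)
    have z0: "z \<noteq> 0" using z mu n by auto
    then have u0: "u \<noteq> 0" using uz by auto
    have pw: "u ^ (2 * j) = z ^ j" for j by (simp add: power_mult uz)
    have uL: "u ^ length ds = \<mu>" using L z by (simp add: pw[symmetric] mult_2)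
    have "Fs 2 u ds = 0" using H[OF u0] uL Smu by (simp add: S_def)
    moreover have "Fs 2 u ds = (\<Sum>j<n. \<beta> j * z ^ j)"
    proof -
      have "Fs 2 u ds = (\<Sum>j<n. 2 powi (2 * cc ds j) * u ^ (2 * j)) +
          (\<Sum>j<n. 2 powi (2 * cc ds (j + n)) * u ^ (2 * (j + n)))"
        unfolding Fs_def L sum_split_add ..
      also have "\<dots> = (\<Sum>j<n. \<beta> j * z ^ j)"
        unfolding \<beta>_def pw by (simp add: sum.distrib algebra_simps power_add z)
      finally show ?thesis .
    qed
    ultimately show ?thesis by simp
  qed
  have R: "2 * cc ds j = 2 * cc ds (j + n) - sum_list ds" if j: "j < n" for j
  proof -
    have "\<beta> j = 0" by (rule poly_vanish[OF n mu key j])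
    then have "(2::complex) powi (2 * cc ds j) = inverse (2 powi S) * 2 powi (2 * cc ds (j + n))"
      by (simp add: \<beta>_def \<mu>_def add_eq_0_iff)
    also have "\<dots> = 2 powi (2 * cc ds (j + n) - S)"
      by (simp add: power_int_diff field_simps)
    finally show ?thesis using two_powi_inj S_def by blast
  qed
  show ?thesis by (rule combi[OF L n R])
qed

lemma ex_root: "n > 0 \<Longrightarrow> c \<noteq> 0 \<Longrightarrow> \<exists>u::complex. u ^ n = c"
proof -
  assume "n > 0" "c \<noteq> 0"
  then have "card {z::complex. z ^ n = c} > 0" using card_nth_roots by simp
  then have "{z::complex. z ^ n = c} \<noteq> {}" by (metis card.empty less_irrefl)
  then show ?thesis by auto
qed

lemma Fs1: "Fs 1 u ds = (\<Sum>j<length ds. (u^2) ^ j)"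
  by (simp add: Fs_def power_mult)

lemma easy:
  assumes ds: "ds \<noteq> []" and l0: "lam \<noteq> 0" and nh: "\<not> (lam = -1 \<and> even (length ds))"
  shows "\<exists>u. u \<noteq> 0 \<and> u ^ length ds = lam \<and> Fs 1 u ds \<noteq> 0"
proof -
  let ?L = "length ds"
  have Lpos: "?L > 0" using ds by simp
  show ?thesis
  proof (cases "lam = 1 \<or> lam = -1")
    case True
    define u :: complex where "u = (if lam = 1 then 1 else -1)"
    have "u ^ ?L = lam" using True nh by (auto simp: u_def)
    moreover have "u^2 = 1" by (simp add: u_def)
    ultimately show ?thesis using Lpos by (intro exI[of _ u]) (auto simp: Fs1 u_def)
  next
    case False
    obtain u where u: "u ^ ?L = lam" using ex_root[OF Lpos l0] by blast
    then have u0: "u \<noteq> 0" using l0 Lpos by auto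
    have "Fs 1 u ds \<noteq> 0"
    proof (cases "u^2 = 1")
      case True then show ?thesis using Lpos by (simp add: Fs1)
    next
      case False
      have "1 - (u^2) ^ ?L = (1 - u^2) * Fs 1 u ds" by (simp add: Fs1 one_diff_power_eq)
      moreover have "(u^2) ^ ?L = lam^2" using u by (simp add: power_mult[symmetric] mult.commute power_mult)
      moreover have "lam^2 \<noteq> 1" using \<open>\<not> (lam = 1 \<or> lam = -1)\<close> by (simp add: power2_eq_1_iff)
      ultimately show ?thesis by auto
    qed
    then show ?thesis using u u0 by blast
  qed
qed

lemma hit_F:
  assumes s: "s \<noteq> 0" and t: "t \<noteq> 0"
    and D: "s powi sum_list ds * inverse t ^ length ds = lam"
    and F: "Fs s (inverse t) ds \<noteq> 0"
  shows "\<exists>X\<in>SL2C. \<exists>Y\<in>SL2C. word_map (G ds) X Y = Tm lam c"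
proof -
  have E: "Ew s t (G ds) \<noteq> 0"
  proof
    assume "Ew s t (G ds) = 0"
    then show False using Ew_G[OF s t, of ds] F t by simp
  qed
  define v where "v = c / Ew s t (G ds)"
  have "word_map (G ds) (Tm s 0) (Tm t v) = Tm lam c"
    using word_map_tri[OF s t] Dw_G[OF s] D E by (simp add: v_def)
  moreover have "Tm s 0 \<in> SL2C" "Tm t v \<in> SL2C" using s t by (auto simp: SL2C_def Tm_det)
  ultimately show ?thesis by blast
qed

lemma hit0:
  assumes ds: "ds \<noteq> []" and l0: "lam \<noteq> 0"
  shows "\<exists>X\<in>SL2C. \<exists>Y\<in>SL2C. word_map (G ds) X Y = Tm lam 0"
proof -
  obtain u where u: "u ^ length ds = lam" using ex_root[of "length ds" lam] ds l0 by auto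
  then have u0: "u \<noteq> 0" using l0 ds by auto
  have "word_map (G ds) (Tm 1 0) (Tm (inverse u) 0) = Tm lam 0"
    using word_map_tri[of 1 "inverse u" "G ds" 0] Dw_G[of 1 "inverse u" ds] u u0 by simp
  moreover have "Tm 1 0 \<in> SL2C" "Tm (inverse u) 0 \<in> SL2C" using u0 by (auto simp: SL2C_def Tm_det)
  ultimately show ?thesis by blast
qed

lemma hit_all:
  assumes ds: "ds \<noteq> []" and NP: "\<not> (\<exists>e. e \<noteq> [] \<and> ds = e @ e)" and l0: "lam \<noteq> 0"
  shows "\<exists>X\<in>SL2C. \<exists>Y\<in>SL2C. word_map (G ds) X Y = Tm lam c"
proof (cases "c = 0")
  case True then show ?thesis using hit0[OF ds l0] by simp
next
  case c: False
  show ?thesis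
  proof (cases "lam = -1 \<and> even (length ds)")
    case False
    obtain u where u: "u \<noteq> 0" "u ^ length ds = lam" "Fs 1 u ds \<noteq> 0" using easy[OF ds l0 False] by blast
    show ?thesis by (rule hit_F[of 1 "inverse u"]) (use u in auto)
  next
    case True
    then obtain n where L: "length ds = n + n" by (metis evenE mult_2)
    have n: "n > 0" using L ds by (cases n) auto
    show ?thesis
    proof (cases "\<exists>u. u \<noteq> 0 \<and> 2 powi sum_list ds * u ^ length ds = -1 \<and> Fs 2 u ds \<noteq> 0")
      case True
      then obtain u where u: "u \<noteq> 0" "2 powi sum_list ds * u ^ length ds = -1" "Fs 2 u ds \<noteq> 0" by blast
      show ?thesis by (rule hit_F[of 2 "inverse u"]) (use u \<open>lam = -1 \<and> _\<close> in auto)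
    next
      case False
      then have "ds = take n ds @ take n ds" using hard[OF L n] by blast
      moreover have "take n ds \<noteq> []" using n L by auto
      ultimately show ?thesis using NP by blast
    qed
  qed
qed



lemma det1_inv: fixes X :: "complex^2^2" assumes "det X = 1"
  shows "X ** matrix_inv X = mat 1" "matrix_inv X ** X = mat 1"
proof -
  obtain p q r w where X: "X = M2 p q r w" using M2_eta by blast
  have d: "p * w - q * r = 1" using assms by (simp add: X M2_det)
  have i: "matrix_inv X = M2 w (- q) (- r) p"
    unfolding X by (rule minv_M2[OF d])
  show "X ** matrix_inv X = mat 1" "matrix_inv X ** X = mat 1"
    unfolding i unfolding X using d by (simp_all add: M2_mult M2_one M2_eq_iff algebra_simps)
qed

lemma conj_inv:
  fixes P Q X :: "complex^2^2"
  assumes PQ: "P ** Q = mat 1" "Q ** P = mat 1" and dX: "det X = 1"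
  shows "matrix_inv (P ** X ** Q) = P ** matrix_inv X ** Q"
proof (rule minv_eq)
  have qp: "Q ** (P ** Z) = Z" for Z :: "complex^2^2" by (metis PQ(2) matrix_mul_assoc matrix_mul_lid)
  have xi: "X ** (matrix_inv X ** Z) = Z" for Z :: "complex^2^2"
    by (metis det1_inv(1)[OF dX] matrix_mul_assoc matrix_mul_lid)
  have ix: "matrix_inv X ** (X ** Z) = Z" for Z :: "complex^2^2"
    by (metis det1_inv(2)[OF dX] matrix_mul_assoc matrix_mul_lid)
  show "P ** X ** Q ** (P ** matrix_inv X ** Q) = mat 1"
    by (simp add: matrix_mul_assoc[symmetric] qp xi PQ(1))
  show "P ** matrix_inv X ** Q ** (P ** X ** Q) = mat 1"
    by (simp add: matrix_mul_assoc[symmetric] qp ix PQ(1))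
qed

lemma conj_word:
  fixes P Q X Y :: "complex^2^2"
  assumes PQ: "P ** Q = mat 1" "Q ** P = mat 1" and dX: "det X = 1" and dY: "det Y = 1"
  shows "word_map w (P ** X ** Q) (P ** Y ** Q) = P ** word_map w X Y ** Q"
proof (induction w)
  case Nil then show ?case by (simp add: word_map_Nil matrix_mul_assoc PQ(1))
next
  case (Cons l w)
  have qp: "Q ** (P ** Z) = Z" for Z :: "complex^2^2" by (metis PQ(2) matrix_mul_assoc matrix_mul_lid)
  have L: "letter_mat (P ** X ** Q) (P ** Y ** Q) l = P ** letter_mat X Y l ** Q"
    by (cases l) (auto simp: letter_mat_def conj_inv[OF PQ dX] conj_inv[OF PQ dY])
  show ?case unfolding word_map_Cons L Cons by (simp add: matrix_mul_assoc[symmetric] qp)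
qed

lemma det_conj:
  fixes P Q :: "complex^2^2"
  assumes PQ: "P ** Q = mat 1" shows "det (P ** (X::complex^2^2) ** Q) = det X"
proof -
  have "det P * det Q = 1" using PQ det_mul[of P Q] by (simp add: det_I)
  then show ?thesis by (simp add: det_mul)
qed

lemma quad_root: "\<exists>l::complex. l^2 - b * l + 1 = 0"
proof -
  define D where "D = csqrt (b^2 - 4)"
  have D2: "D^2 = b^2 - 4" by (simp add: D_def)
  define l where "l = (b + D) / 2"
  have "l^2 - b * l + 1 = (D^2 - b^2 + 4) / 4" by (simp add: l_def field_simps power2_eq_square)
  then show ?thesis using D2 by auto
qed

lemma gen_e12: "(r::complex) \<noteq> 0 \<Longrightarrow> a * l / r + (a + s) * (- a / r) = a * (l - a - s) / r"
  by (simp add: field_simps)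

lemma surj_from_hit:
  assumes H: "\<And>lam c. lam \<noteq> 0 \<Longrightarrow> \<exists>X\<in>SL2C. \<exists>Y\<in>SL2C. word_map w X Y = Tm lam c"
  shows "word_map_surjective_SL2C w"
  unfolding word_map_surjective_SL2C_def
proof
  fix g assume g: "g \<in> SL2C"
  define p where "p = g$1$1" define q where "q = g$1$2" define r where "r = g$2$1" define z where "z = g$2$2"
  have gM: "g = M2 p q r z" unfolding p_def q_def r_def z_def by (rule M2_eta)
  have d: "p * z - q * r = 1" using g gM by (simp add: SL2C_def M2_det)
  show "\<exists>X\<in>SL2C. \<exists>Y\<in>SL2C. word_map w X Y = g"
  proof (cases "r = 0")
    case True
    then have "p * z = 1" using d by simp
    then have "p \<noteq> 0" "z = inverse p" by (auto simp: inverse_unique)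
    then have "g = Tm p q" using gM True by (simp add: Tm_def)
    then show ?thesis using H \<open>p \<noteq> 0\<close> by blast
  next
    case r0: False
    obtain l where l: "l^2 - (p + z) * l + 1 = 0" using quad_root by blast
    then have l0: "l \<noteq> 0" by auto
    have il: "inverse l = p + z - l"
      using l l0 by (simp add: field_simps power2_eq_square)
    define P where "P = M2 (l - z) 1 r 0"
    define Q where "Q = M2 0 (1/r) 1 (-(l - z)/r)"
    have PQ: "P ** Q = mat 1" "Q ** P = mat 1"
      using r0 by (auto simp: P_def Q_def M2_mult M2_one M2_eq_iff field_simps)
    have qr: "q * r = p * z - 1" using d by algebra
    have "(l - z) * (z - inverse l) = q * r" unfolding qr il using l by algebra
    then have e12: "(l - z) * l / r + ((l - z) + inverse l) * (-(l - z) / r) = q"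
      using gen_e12[OF r0, of "l - z" l "inverse l"] r0 by (simp add: algebra_simps)
    have "P ** Tm l 1 ** Q = M2 ((l - z) + inverse l) ((l - z) * l / r + ((l - z) + inverse l) * (-(l - z) / r)) r z"
      using r0 by (simp add: P_def Q_def Tm_def M2_mult M2_eq_iff field_simps)
    also have "\<dots> = g" unfolding gM e12 using il by (simp add: M2_eq_iff)
    finally have gc: "P ** Tm l 1 ** Q = g" .
    obtain X Y where XY: "X \<in> SL2C" "Y \<in> SL2C" "word_map w X Y = Tm l 1" using H[OF l0] by blast
    have "word_map w (P ** X ** Q) (P ** Y ** Q) = g"
      using conj_word[OF PQ, of X Y w] XY gc by (simp add: SL2C_def)
    moreover have "P ** X ** Q \<in> SL2C" "P ** Y ** Q \<in> SL2C"
      using XY det_conj[OF PQ(1)] by (auto simp: SL2C_def)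
    ultimately show ?thesis by blast
  qed
qed



definition dsf :: "(nat \<Rightarrow> int) \<Rightarrow> (nat \<Rightarrow> int) \<Rightarrow> nat \<Rightarrow> int list" where
  "dsf a b i = a i # replicate (nat (- b i) - 1) 0"

lemma G_rep0: "G (replicate m 0) = replicate m (False, True)"
  by (induction m) (auto simp: G_def gen_pow_def)

lemma G_single: "G [d] = gen_pow True d @ [(False, True)]" by (simp add: G_def)

lemma block:
  assumes "(bi::int) < 0"
  shows "gen_pow True ai @ gen_pow False bi = G (ai # replicate (nat (- bi) - 1) 0)"
proof -
  have h: "nat (- bi) = Suc (nat (- bi) - 1)" using assms by simp
  have "gen_pow False bi = replicate (nat (- bi)) (False, True)" using assms by (simp add: gen_pow_def)
  also have "\<dots> = replicate (Suc (nat (- bi) - 1)) (False, True)" by (simp only: h[symmetric])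
  also have "\<dots> = (False, True) # replicate (nat (- bi) - 1) (False, True)" by (simp only: replicate_Suc)
  finally have "gen_pow False bi = (False, True) # replicate (nat (- bi) - 1) (False, True)" .
  then show ?thesis using G_append[of "[ai]" "replicate (nat (- bi) - 1) 0"]
    by (simp add: G_rep0 G_single)
qed

lemma xy_G:
  assumes "\<forall>i\<in>set xs. b i < 0"
  shows "concat (map (\<lambda>i. gen_pow True (a i) @ gen_pow False (b i)) xs) = G (concat (map (dsf a b) xs))"
  using assms
proof (induction xs)
  case Nil then show ?case by (simp add: G_Nil)
next
  case (Cons i xs) then show ?case
    by (simp add: block dsf_def flip: G_append)
qed

definition yv :: "letter \<Rightarrow> int" where
  "yv l = (if fst l then 0 else if snd l then -1 else 1)"

definition ysum :: "letter list \<Rightarrow> int" where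
  "ysum w = sum_list (map yv w)"

lemma ysum_step: "free_step u v \<Longrightarrow> ysum u = ysum v"
  by (induction rule: free_step.induct) (auto simp: ysum_def yv_def)

lemma ysum_free_eq: "free_eq u v \<Longrightarrow> ysum u = ysum v"
  unfolding free_eq_def
  by (induction rule: equivclp_induct) (auto dest: ysum_step)

lemma ysum_G: "ysum (G e) = - int (length e)"
  by (induction e) (auto simp: ysum_def G_def gen_pow_def yv_def map_replicate sum_list_replicate)

lemma G_nontriv: "e \<noteq> [] \<Longrightarrow> \<not> free_eq (G e) []"
proof
  assume "e \<noteq> []" "free_eq (G e) []"
  then have "ysum (G e) = ysum []" by (intro ysum_free_eq)
  then show False using ysum_G[of e] \<open>e \<noteq> []\<close> by (simp add: ysum_def)
qed

theorem corollary7p5: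
  fixes k :: nat and a b :: "nat \<Rightarrow> int"
  assumes "k \<ge> 1"
    and "\<forall>i\<in>{1..k}. a i \<noteq> 0"
    and "\<forall>i\<in>{1..k}. b i \<noteq> 0"
    and "\<forall>i\<in>{1..k}. b i < 0"
  shows "word_map_surjective_SL2C (xy_word k a b)
         \<or> (\<exists>v. \<not> free_eq v [] \<and> free_eq (xy_word k a b) (v @ v))"
proof -
  define ds where "ds = concat (map (dsf a b) [1..<k+1])"
  have W: "xy_word k a b = G ds"
    unfolding xy_word_def ds_def using assms(4) by (intro xy_G) auto
  have ds: "ds \<noteq> []"
  proof -
    have "1 \<in> set [1..<k+1]" using assms(1) by auto
    moreover have "dsf a b 1 \<noteq> []" by (simp add: dsf_def)
    ultimately show ?thesis unfolding ds_def by auto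
  qed
  show ?thesis
  proof (cases "\<exists>e. e \<noteq> [] \<and> ds = e @ e")
    case True
    then obtain e where e: "e \<noteq> []" "ds = e @ e" by blast
    have "\<not> free_eq (G e) [] \<and> free_eq (xy_word k a b) (G e @ G e)"
      using G_nontriv[OF e(1)] by (simp add: W e(2) G_append free_eq_def)
    then show ?thesis by blast
  next
    case False
    have "word_map_surjective_SL2C (G ds)"
      by (rule surj_from_hit) (rule hit_all[OF ds False])
    then show ?thesis by (simp add: W)
  qed
qed


end
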